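(* Let $\mathbf D$ be a Condorcet super-domain, let $V$ be a finite set of odd cardinality, let $(T_v)_{v\in V}$ be a family of tilings with all $T_v\in\mathbf D$, and let $T=sm((T_v)_{v\in V})$. Then $\mathbf D\cup\{T\}$ is a Condorcet super-domain.
   Context: Fix an integer $n\ge 3$ and write $[n]=\{1,\dots,n\}$. Let $\Lambda$ be the set of 3-element subsets of $[n]$; a triple $\{i,j,k\}$ with $i<j<k$ is written $ijk$. For a 4-element subset $F=\{i<j<k<l\}$ of $[n]$, the stick of $F$ is the sequence $(ijk,\ ijl,\ ikl,\ jkl)$. A tiling (the inversion set of a rhombus tiling of the zonogon $Z(n;2)$) is a subset $T\subseteq\Lambda$ such that for every 4-element $F\subseteq[n]$, $T\cap\mathrm{stick}(F)$ is an initial segment or a final segment of the stick (empty set and whole stick allowed). For a finite set $V$ of odd cardinality and tilings $(T_v)_{v\in V}$, $sm((T_v)_{v\in V})$ is the set of triples lying in $T_v$ for more than $|V|/2$ indices $v$. A set $\mathbf D$ of tilings is a Condorcet super-domain if for every finite $V$ of odd cardinality and every family $(T_v)_{v\in V}$ with all $T_v\in\mathbf D$, $sm((T_v)_{v\in V})$ is a tiling. *)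

theory Defs
  imports Main
begin

definition Lambda :: "nat \<Rightarrow> nat set set" where
  "Lambda n = {t. t \<subseteq> {1..n} \<and> card t = 3}"

definition stick :: "nat \<Rightarrow> nat \<Rightarrow> nat \<Rightarrow> nat \<Rightarrow> nat set list" where
  "stick i j k l = [{i,j,k}, {i,j,l}, {i,k,l}, {j,k,l}]"

definition is_tiling :: "nat \<Rightarrow> nat set set \<Rightarrow> bool" where
  "is_tiling n T \<longleftrightarrow> T \<subseteq> Lambda n \<and>
     (\<forall>i j k l. 1 \<le> i \<and> i < j \<and> j < k \<and> k < l \<and> l \<le> n \<longrightarrow>
        (\<exists>m \<le> 4. T \<inter> set (stick i j k l) = set (take m (stick i j k l))
                 \<or> T \<inter> set (stick i j k l) = set (drop m (stick i j k l))))"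

definition sm :: "nat \<Rightarrow> 'v set \<Rightarrow> ('v \<Rightarrow> nat set set) \<Rightarrow> nat set set" where
  "sm n V T = {t \<in> Lambda n. 2 * card {v \<in> V. t \<in> T v} > card V}"

text \<open>Condorcet super-domain. Voter sets are quantified over finite sets of naturals;
  since sm depends only on the multiset of tilings, this is no loss of generality.\<close>
definition condorcet_super_domain :: "nat \<Rightarrow> nat set set set \<Rightarrow> bool" where
  "condorcet_super_domain n D \<longleftrightarrow> D \<subseteq> {T. is_tiling n T} \<and>
     (\<forall>(V::nat set) T. finite V \<and> odd (card V) \<and> (\<forall>v\<in>V. T v \<in> D) \<longrightarrow>
        is_tiling n (sm n V T))"

end

theory Submission
  imports Defs
begin

definition pb :: "nat \<Rightarrow> nat \<Rightarrow> bool" where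
  "pb p q \<longleftrightarrow> (p + 7 - q) mod 8 \<le> 3"

definition patB :: "nat \<Rightarrow> (nat \<Rightarrow> bool) \<Rightarrow> bool" where
  "patB p g \<longleftrightarrow> g 0 = pb p 0 \<and> g 1 = pb p 1 \<and> g 2 = pb p 2 \<and> g 3 = pb p 3"

definition allowedB :: "(nat \<Rightarrow> bool) \<Rightarrow> bool" where
  "allowedB g \<longleftrightarrow> (\<exists>p\<in>set [0,1,2,3,4,5,6,7]. patB p g)"

definition csatB :: "((nat \<times> bool) \<times> (nat \<times> bool)) list \<Rightarrow> (nat \<Rightarrow> bool) \<Rightarrow> bool" where
  "csatB cls g \<longleftrightarrow> (\<forall>c\<in>set cls. g (fst (fst c)) = snd (fst c) \<or> g (fst (snd c)) = snd (snd c))"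

definition maj3 :: "bool \<Rightarrow> bool \<Rightarrow> bool \<Rightarrow> bool" where
  "maj3 a b c \<longleftrightarrow> (a \<and> b) \<or> (a \<and> c) \<or> (b \<and> c)"

definition Phis :: "(nat list \<times> ((nat \<times> bool) \<times> (nat \<times> bool)) list) list" where
  "Phis = [
    ([0,1,2,3,4], [((0,True),(1,False)), ((1,True),(2,False)), ((2,True),(3,False))]),
    ([0,1,4,5], [((1,True),(3,False)), ((1,False),(3,True)), ((2,True),(3,False)), ((2,False),(3,True))]),
    ([1,2,3,4,5], [((0,True),(3,True)), ((1,True),(2,False)), ((2,True),(3,False))]),
    ([0,2,4,6], [((0,True),(1,False)), ((0,False),(1,True)), ((2,True),(3,False)), ((2,False),(3,True))]),
    ([1,2,5,6], [((0,True),(3,True)), ((0,False),(3,False)), ((2,True),(3,False)), ((2,False),(3,True))]),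
    ([2,3,4,5,6], [((0,True),(3,True)), ((0,False),(1,True)), ((2,True),(3,False))]),
    ([0,1,2,3,7], [((0,True),(1,False)), ((0,False),(3,False)), ((1,True),(2,False))]),
    ([0,3,4,7], [((0,True),(2,False)), ((0,False),(2,True)), ((1,True),(2,False)), ((1,False),(2,True))]),
    ([1,3,5,7], [((0,True),(3,True)), ((0,False),(3,False)), ((1,True),(2,False)), ((1,False),(2,True))]),
    ([0,1,2,6,7], [((0,True),(1,False)), ((0,False),(3,False)), ((2,False),(3,True))]),
    ([2,3,6,7], [((0,True),(3,True)), ((0,False),(3,False)), ((1,True),(3,True)), ((1,False),(3,False))]),
    ([0,1,5,6,7], [((0,False),(3,False)), ((1,False),(2,True)), ((2,False),(3,True))]),
    ([0,4,5,6,7], [((0,False),(1,True)), ((1,False),(2,True)), ((2,False),(3,True))]),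
    ([3,4,5,6,7], [((0,True),(3,True)), ((0,False),(1,True)), ((1,False),(2,True))])
  ]"

lemma F1:
  fixes e :: "nat \<Rightarrow> bool"
  assumes "\<not> (e 0 \<and> e 2 \<and> e 5)" "\<not> (e 0 \<and> e 3 \<and> e 5)" "\<not> (e 0 \<and> e 3 \<and> e 6)"
    "\<not> (e 1 \<and> e 3 \<and> e 6)" "\<not> (e 1 \<and> e 4 \<and> e 6)" "\<not> (e 1 \<and> e 4 \<and> e 7)"
    "\<not> (e 2 \<and> e 4 \<and> e 7)" "\<not> (e 2 \<and> e 5 \<and> e 7)"
  shows "list_ex (\<lambda>c. list_all (\<lambda>p. p \<in> set (fst c) \<or> \<not> e p) [0,1,2,3,4,5,6,7]) Phis"
  using assms unfolding Phis_def
  apply simp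
  by argo

lemma F2:
  assumes "(G,cls) \<in> set Phis" "allowedB g" "\<forall>p\<in>set [0,1,2,3,4,5,6,7]. p \<notin> set G \<longrightarrow> \<not> patB p g"
  shows "csatB cls g"
  using assms
  by (cases "g 0"; cases "g 1"; cases "g 2"; cases "g 3";
      simp add: Phis_def allowedB_def patB_def pb_def csatB_def; elim disjE; simp)

lemma F3:
  assumes "(G,cls) \<in> set Phis" "csatB cls g"
  shows "allowedB g"
  using assms
  by (cases "g 0"; cases "g 1"; cases "g 2"; cases "g 3";
      simp add: Phis_def allowedB_def patB_def pb_def csatB_def; elim disjE; simp)

lemma F4:
  assumes "(G,cls) \<in> set Phis" "cl \<in> set cls"
  shows "fst (fst cl) < 4 \<and> fst (snd cl) < 4"
  using assms by (simp add: Phis_def; elim disjE; auto)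

lemma Fbad:
  assumes "patB p1 g" "patB p2 h" "patB p3 k" "allowedB (\<lambda>q. maj3 (g q) (h q) (k q))"
    "(p1,p2,p3) \<in> set [(0,2,5),(0,3,5),(0,3,6),(1,3,6),(1,4,6),(1,4,7),(2,4,7),(2,5,7)]"
  shows False
  using assms by (simp add: patB_def allowedB_def pb_def maj3_def; elim disjE; simp)


lemma ex_le4: "(\<exists>m::nat\<le>4. P m) \<longleftrightarrow> P 0 \<or> P 1 \<or> P 2 \<or> P 3 \<or> P 4"
proof
  assume "\<exists>m\<le>4. P m"
  then obtain m where "m \<le> 4" "P m" by blast
  then show "P 0 \<or> P 1 \<or> P 2 \<or> P 3 \<or> P 4"
  proof -
    have "m = 0 \<or> m = 1 \<or> m = 2 \<or> m = 3 \<or> m = 4" using \<open>m \<le> 4\<close> by auto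
    then show ?thesis using \<open>P m\<close> by blast
  qed
next
  assume "P 0 \<or> P 1 \<or> P 2 \<or> P 3 \<or> P 4"
  moreover have "(0::nat) \<le> 4" "(1::nat) \<le> 4" "(2::nat) \<le> 4" "(3::nat) \<le> 4" "(4::nat) \<le> 4" by auto
  ultimately show "\<exists>m\<le>4. P m" by blast
qed

lemma int_eq:
  assumes "S \<subseteq> {a,b,c,d}"
  shows "(X \<inter> {a,b,c,d} = S) \<longleftrightarrow>
    ((a \<in> X) = (a \<in> S)) \<and> ((b \<in> X) = (b \<in> S)) \<and> ((c \<in> X) = (c \<in> S)) \<and> ((d \<in> X) = (d \<in> S))"
proof
  assume h: "X \<inter> {a,b,c,d} = S"
  have "\<And>y. y \<in> {a,b,c,d} \<Longrightarrow> (y \<in> X) = (y \<in> S)" unfolding h[symmetric] by simp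
  then show "((a \<in> X) = (a \<in> S)) \<and> ((b \<in> X) = (b \<in> S)) \<and> ((c \<in> X) = (c \<in> S)) \<and> ((d \<in> X) = (d \<in> S))"
    by simp
next
  assume h: "((a \<in> X) = (a \<in> S)) \<and> ((b \<in> X) = (b \<in> S)) \<and> ((c \<in> X) = (c \<in> S)) \<and> ((d \<in> X) = (d \<in> S))"
  show "X \<inter> {a,b,c,d} = S"
  proof (rule set_eqI)
    fix y
    have "y \<in> X \<inter> {a,b,c,d} \<longleftrightarrow> (y = a \<or> y = b \<or> y = c \<or> y = d) \<and> y \<in> X" by blast
    moreover have "y \<in> S \<longleftrightarrow> (y = a \<or> y = b \<or> y = c \<or> y = d) \<and> y \<in> S" using assms by blast
    ultimately show "y \<in> X \<inter> {a,b,c,d} \<longleftrightarrow> y \<in> S" using h by blast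
  qed
qed

lemma allowed_iff:
  assumes "distinct [a,b,c,d]"
  shows "(\<exists>m\<le>4. X \<inter> set [a,b,c,d] = set (take m [a,b,c,d]) \<or> X \<inter> set [a,b,c,d] = set (drop m [a,b,c,d]))
     \<longleftrightarrow> allowedB (\<lambda>q. [a,b,c,d]!q \<in> X)"
proof -
  have d: "a \<noteq> b" "a \<noteq> c" "a \<noteq> d" "b \<noteq> c" "b \<noteq> d" "c \<noteq> d"
          "b \<noteq> a" "c \<noteq> a" "d \<noteq> a" "c \<noteq> b" "d \<noteq> b" "d \<noteq> c" using assms by auto
  have l: "set [a,b,c,d] = {a,b,c,d}"
     "set (take 0 [a,b,c,d]) = {}" "set (take 1 [a,b,c,d]) = {a}" "set (take 2 [a,b,c,d]) = {a,b}"
     "set (take 3 [a,b,c,d]) = {a,b,c}" "set (take 4 [a,b,c,d]) = {a,b,c,d}"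
     "set (drop 0 [a,b,c,d]) = {a,b,c,d}" "set (drop 1 [a,b,c,d]) = {b,c,d}" "set (drop 2 [a,b,c,d]) = {c,d}"
     "set (drop 3 [a,b,c,d]) = {d}" "set (drop 4 [a,b,c,d]) = {}"
    by (simp_all add: numeral_eq_Suc)
  have s: "{} \<subseteq> {a,b,c,d}" "{a} \<subseteq> {a,b,c,d}" "{a,b} \<subseteq> {a,b,c,d}" "{a,b,c} \<subseteq> {a,b,c,d}"
    "{a,b,c,d} \<subseteq> {a,b,c,d}" "{b,c,d} \<subseteq> {a,b,c,d}" "{c,d} \<subseteq> {a,b,c,d}" "{d} \<subseteq> {a,b,c,d}" by auto
  have g: "[a,b,c,d]!0 = a" "[a,b,c,d]!1 = b" "[a,b,c,d]!2 = c" "[a,b,c,d]!3 = d" by (simp_all add: numeral_eq_Suc)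
  show ?thesis
    unfolding ex_le4 l int_eq[OF s(1)] int_eq[OF s(2)] int_eq[OF s(3)] int_eq[OF s(4)] int_eq[OF s(5)]
      int_eq[OF s(6)] int_eq[OF s(7)] int_eq[OF s(8)] allowedB_def patB_def g
    by (cases "a \<in> X"; cases "b \<in> X"; cases "c \<in> X"; cases "d \<in> X"; simp add: d pb_def)
qed

lemma allowedB_cong: "(\<And>q. q < 4 \<Longrightarrow> g q = h q) \<Longrightarrow> allowedB g = allowedB h"
  by (simp add: allowedB_def patB_def)

lemma stick_facts:
  assumes "1 \<le> i" "i < j" "j < k" "k < l" "l \<le> n"
  shows "distinct (stick i j k l)" "\<And>q. q < 4 \<Longrightarrow> stick i j k l ! q \<in> Lambda n"
proof -
  show "distinct (stick i j k l)" using assms unfolding stick_def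
    by (auto simp: insert_eq_iff doubleton_eq_iff)
  fix q :: nat assume "q < 4"
  then have "q = 0 \<or> q = 1 \<or> q = 2 \<or> q = 3" by auto
  then show "stick i j k l ! q \<in> Lambda n" using assms unfolding stick_def Lambda_def
    by (elim disjE; auto)
qed

lemma tiling_iff:
  "is_tiling n X \<longleftrightarrow> X \<subseteq> Lambda n \<and> (\<forall>i j k l. 1 \<le> i \<and> i < j \<and> j < k \<and> k < l \<and> l \<le> n \<longrightarrow>
        allowedB (\<lambda>q. stick i j k l ! q \<in> X))"
proof -
  have "(\<exists>m\<le>4. X \<inter> set (stick i j k l) = set (take m (stick i j k l))
                 \<or> X \<inter> set (stick i j k l) = set (drop m (stick i j k l)))
        \<longleftrightarrow> allowedB (\<lambda>q. stick i j k l ! q \<in> X)"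
    if "1 \<le> i \<and> i < j \<and> j < k \<and> k < l \<and> l \<le> n" for i j k l
  proof -
    have "distinct (stick i j k l)" using stick_facts(1)[of i j k l n] that by auto
    then show ?thesis unfolding stick_def by (rule allowed_iff)
  qed
  then show ?thesis unfolding is_tiling_def by meson
qed

lemma sm_lit:
  assumes "finite V" "odd (card V)" "t \<in> Lambda n"
  shows "((t \<in> sm n V T) = b) \<longleftrightarrow> card V < 2 * card {v\<in>V. (t \<in> T v) = b}"
proof (cases b)
  case True
  then show ?thesis using assms by (simp add: sm_def)
next
  case False
  have e: "{v\<in>V. (t \<in> T v) = b} = V - {v\<in>V. t \<in> T v}" using False by auto
  have c: "card {v\<in>V. (t \<in> T v) = b} = card V - card {v\<in>V. t \<in> T v}"
    unfolding e using assms(1) by (simp add: card_Diff_subset)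
  have le: "card {v\<in>V. t \<in> T v} \<le> card V" using assms(1) by (simp add: card_mono)
  obtain r where r: "card V = 2 * r + 1" using assms(2) oddE by blast
  have m: "(t \<in> sm n V T) \<longleftrightarrow> card V < 2 * card {v\<in>V. t \<in> T v}"
    using assms(3) by (simp add: sm_def)
  show ?thesis unfolding m c using False le r by presburger
qed

lemma maj_clause:
  assumes "finite V" "odd (card V)" "t1 \<in> Lambda n" "t2 \<in> Lambda n"
    "\<forall>v\<in>V. (t1 \<in> T v) = b1 \<or> (t2 \<in> T v) = b2"
  shows "(t1 \<in> sm n V T) = b1 \<or> (t2 \<in> sm n V T) = b2"
proof -
  let ?A = "{v\<in>V. (t1 \<in> T v) = b1}" and ?B = "{v\<in>V. (t2 \<in> T v) = b2}"
  have "V = ?A \<union> ?B" using assms(5) by auto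
  then have "card V \<le> card ?A + card ?B" by (metis card_Un_le)
  moreover obtain r where r: "card V = 2 * r + 1" using assms(2) oddE by blast
  ultimately have "card V < 2 * card ?A \<or> card V < 2 * card ?B" by presburger
  then show ?thesis using sm_lit[OF assms(1,2,3)] sm_lit[OF assms(1,2,4)] by blast
qed

lemma csat_sm:
  assumes "finite V" "odd (card V)" "(G,cls) \<in> set Phis" "\<And>q. q < 4 \<Longrightarrow> ts ! q \<in> Lambda n"
    "\<forall>v\<in>V. csatB cls (\<lambda>q. ts!q \<in> T v)"
  shows "csatB cls (\<lambda>q. ts!q \<in> sm n V T)"
  unfolding csatB_def
proof
  fix c assume c: "c \<in> set cls"
  then have "fst (fst c) < 4" "fst (snd c) < 4" using F4[OF assms(3)] by auto
  moreover have "\<forall>v\<in>V. (ts ! fst (fst c) \<in> T v) = snd (fst c) \<or> (ts ! fst (snd c) \<in> T v) = snd (snd c)"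
    using assms(5) c unfolding csatB_def by blast
  ultimately show "(ts ! fst (fst c) \<in> sm n V T) = snd (fst c) \<or> (ts ! fst (snd c) \<in> sm n V T) = snd (snd c)"
    using maj_clause[OF assms(1,2)] assms(4) by blast
qed

lemma coll_insert: "{v \<in> insert a A. P v} = (if P a then insert a {v\<in>A. P v} else {v\<in>A. P v})"
  by auto

lemma card3: "card {v\<in>{0,1,2::nat}. P v} = of_bool (P 0) + of_bool (P 1) + of_bool (P 2)"
proof -
  have e: "{v\<in>{0,1,2::nat}. P v} = (if P 0 then {0} else {}) \<union> (if P 1 then {1} else {}) \<union> (if P 2 then {2} else {})"
  proof (rule set_eqI)
    fix x show "x \<in> {v\<in>{0,1,2::nat}. P v} \<longleftrightarrow> x \<in> (if P 0 then {0} else {}) \<union> (if P 1 then {1} else {}) \<union> (if P 2 then {2} else {})"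
      by (cases "x = 0"; cases "x = 1"; cases "x = 2"; simp)
  qed
  show ?thesis unfolding e by (cases "P 0"; cases "P 1"; cases "P 2"; simp)
qed

lemma sm3:
  assumes "t \<in> Lambda n"
  shows "t \<in> sm n {0,1,2::nat} (\<lambda>v. if v = 0 then X else if v = 1 then Y else Z)
     \<longleftrightarrow> maj3 (t \<in> X) (t \<in> Y) (t \<in> Z)"
  using assms
  unfolding sm_def mem_Collect_eq card3
  by (cases "t \<in> X"; cases "t \<in> Y"; cases "t \<in> Z"; simp add: maj3_def)


lemma stick_cls:
  assumes cs: "condorcet_super_domain n D" and st: "1 \<le> i" "i < j" "j < k" "k < l" "l \<le> n"
  shows "\<exists>G cls. (G,cls) \<in> set Phis \<and> (\<forall>X\<in>D. csatB cls (\<lambda>q. stick i j k l ! q \<in> X))"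
proof -
  define ts where "ts = stick i j k l"
  have lam: "\<And>q. q < 4 \<Longrightarrow> ts ! q \<in> Lambda n" unfolding ts_def using stick_facts(2)[OF st] .
  have Dt: "\<And>X. X \<in> D \<Longrightarrow> is_tiling n X" using cs unfolding condorcet_super_domain_def by blast
  have Dal: "allowedB (\<lambda>q. ts ! q \<in> X)" if "X \<in> D" for X
    using Dt[OF that] st unfolding tiling_iff ts_def by blast
  define e where "e p = (\<exists>X\<in>D. patB p (\<lambda>q. ts ! q \<in> X))" for p
  have csd: "\<forall>(V::nat set) T. finite V \<and> odd (card V) \<and> (\<forall>v\<in>V. T v \<in> D) \<longrightarrow> is_tiling n (sm n V T)"
    using cs unfolding condorcet_super_domain_def by (elim conjE)
  have m3: "allowedB (\<lambda>q. maj3 (ts ! q \<in> X) (ts ! q \<in> Y) (ts ! q \<in> Z))"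
    if XYZ: "X \<in> D" "Y \<in> D" "Z \<in> D" for X Y Z
  proof -
    define T3 where "T3 = (\<lambda>v::nat. if v = 0 then X else if v = 1 then Y else Z)"
    have "\<forall>v\<in>{0,1,2::nat}. T3 v \<in> D" unfolding T3_def using XYZ by simp
    moreover have "finite {0,1,2::nat}" "odd (card {0,1,2::nat})" by simp_all
    ultimately have "is_tiling n (sm n {0,1,2::nat} T3)" using csd by blast
    then have al: "allowedB (\<lambda>q. ts ! q \<in> sm n {0,1,2::nat} T3)"
      using st unfolding tiling_iff ts_def by blast
    have eq: "(ts ! q \<in> sm n {0,1,2::nat} T3) = maj3 (ts ! q \<in> X) (ts ! q \<in> Y) (ts ! q \<in> Z)"
      if "q < 4" for q
      unfolding T3_def by (rule sm3[OF lam[OF that]])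
    have "allowedB (\<lambda>q. ts ! q \<in> sm n {0,1,2::nat} T3) = allowedB (\<lambda>q. maj3 (ts ! q \<in> X) (ts ! q \<in> Y) (ts ! q \<in> Z))"
      by (rule allowedB_cong) (rule eq)
    then show ?thesis using al by simp
  qed
  have bad: "\<not> (e p1 \<and> e p2 \<and> e p3)"
    if tr: "(p1,p2,p3) \<in> set [(0,2,5),(0,3,5),(0,3,6),(1,3,6),(1,4,6),(1,4,7),(2,4,7),(2,5,7)]" for p1 p2 p3
  proof
    assume "e p1 \<and> e p2 \<and> e p3"
    then obtain X Y Z where XYZ: "X \<in> D" "Y \<in> D" "Z \<in> D" and pp: "patB p1 (\<lambda>q. ts ! q \<in> X)"
      "patB p2 (\<lambda>q. ts ! q \<in> Y)" "patB p3 (\<lambda>q. ts ! q \<in> Z)" unfolding e_def by blast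
    show False by (rule Fbad[OF pp m3[OF XYZ] tr])
  qed
  have "list_ex (\<lambda>c. list_all (\<lambda>p. p \<in> set (fst c) \<or> \<not> e p) [0,1,2,3,4,5,6,7]) Phis"
    by (rule F1) (rule bad; simp)+
  then obtain G cls where Gc: "(G,cls) \<in> set Phis" and ne: "\<forall>p\<in>set [0,1,2,3,4,5,6,7]. p \<notin> set G \<longrightarrow> \<not> e p"
    unfolding list_ex_iff list_all_iff by auto
  have "\<forall>X\<in>D. csatB cls (\<lambda>q. ts ! q \<in> X)"
  proof
    fix X assume X: "X \<in> D"
    show "csatB cls (\<lambda>q. ts ! q \<in> X)"
    proof (rule F2[OF Gc Dal[OF X]])
      show "\<forall>p\<in>set [0,1,2,3,4,5,6,7]. p \<notin> set G \<longrightarrow> \<not> patB p (\<lambda>q. ts ! q \<in> X)"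
        using ne X unfolding e_def by blast
    qed
  qed
  then show ?thesis using Gc unfolding ts_def by blast
qed

theorem mainTheorem7:
  fixes n :: nat and D :: "nat set set set" and V :: "'v set" and T :: "'v \<Rightarrow> nat set set"
  assumes "n \<ge> 3"
    and "condorcet_super_domain n D"
    and "finite V" and "odd (card V)"
    and "\<forall>v\<in>V. T v \<in> D"
  shows "condorcet_super_domain n (D \<union> {sm n V T})"
proof -
  let ?S = "sm n V T"
  have key: "\<exists>G cls. (G,cls) \<in> set Phis \<and> (\<forall>X\<in>D \<union> {?S}. csatB cls (\<lambda>q. stick i j k l ! q \<in> X))"
    if st: "1 \<le> i" "i < j" "j < k" "k < l" "l \<le> n" for i j k l
  proof -
    obtain G cls where Gc: "(G,cls) \<in> set Phis" and DX: "\<forall>X\<in>D. csatB cls (\<lambda>q. stick i j k l ! q \<in> X)"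
      using stick_cls[OF assms(2) st] by blast
    have "csatB cls (\<lambda>q. stick i j k l ! q \<in> ?S)"
      using csat_sm[OF assms(3,4) Gc stick_facts(2)[OF st]] DX assms(5) by blast
    then show ?thesis using Gc DX by blast
  qed
  have gen: "is_tiling n (sm n W T')" if "finite W" "odd (card W)" "\<forall>w\<in>W. T' w \<in> D \<union> {?S}"
    for W :: "'w set" and T'
    unfolding tiling_iff
  proof (intro conjI allI impI)
    show "sm n W T' \<subseteq> Lambda n" unfolding sm_def by blast
    fix i j k l assume "1 \<le> i \<and> i < j \<and> j < k \<and> k < l \<and> l \<le> n"
    then have st: "1 \<le> i" "i < j" "j < k" "k < l" "l \<le> n" by auto
    obtain G cls where Gc: "(G,cls) \<in> set Phis" and DX: "\<forall>X\<in>D \<union> {?S}. csatB cls (\<lambda>q. stick i j k l ! q \<in> X)"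
      using key[OF st] by blast
    have "csatB cls (\<lambda>q. stick i j k l ! q \<in> sm n W T')"
      using csat_sm[OF that(1,2) Gc stick_facts(2)[OF st]] DX that(3) by blast
    then show "allowedB (\<lambda>q. stick i j k l ! q \<in> sm n W T')" using F3[OF Gc] by blast
  qed
  have "is_tiling n ?S" using gen[OF assms(3,4)] assms(5) by blast
  then have "D \<union> {?S} \<subseteq> {X. is_tiling n X}" using assms(2) unfolding condorcet_super_domain_def by blast
  then show ?thesis unfolding condorcet_super_domain_def using gen by blast
qed

end
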